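(* For every integer $n\ge 3$, $g(n,3) \ge n/6$.
   Context: For integers $2\le k\le n$, let $S_n$ denote the set of permutations of $[n]=\{1,\dots,n\}$ (written as sequences), and $S_{n,k}$ the set of all sequences of $k$ distinct elements of $[n]$. A sequence $\kappa\in S_{n,k}$ is a subsequence of a permutation $\pi\in S_n$ if its elements appear in $\pi$ in the same relative order as in $\kappa$. A perfect sequence covering array ${\rm PSCA}(n,k)$ with multiplicity $\lambda$ (a positive integer) is a multiset $X$ of elements of $S_n$ such that every $\kappa\in S_{n,k}$ is a subsequence of exactly $\lambda$ elements of $X$ (counted with multiplicity); such an $X$ has size $\lambda k!$. $g(n,k)$ denotes the smallest $\lambda$ for which a ${\rm PSCA}(n,k)$ with multiplicity $\lambda$ exists. *)

theory Defs
  imports Complex_Main "HOL-Library.Multiset" "HOL-Library.Sublist"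
begin

definition perms_seq :: "nat \<Rightarrow> nat list set" where
  "perms_seq n = {\<pi>. distinct \<pi> \<and> set \<pi> = {1..n}}"

definition kseqs :: "nat \<Rightarrow> nat \<Rightarrow> nat list set" where
  "kseqs n k = {\<kappa>. length \<kappa> = k \<and> distinct \<kappa> \<and> set \<kappa> \<subseteq> {1..n}}"

definition is_PSCA :: "nat \<Rightarrow> nat \<Rightarrow> nat \<Rightarrow> nat list multiset \<Rightarrow> bool" where
  "is_PSCA n k lam X \<longleftrightarrow> 0 < lam \<and> set_mset X \<subseteq> perms_seq n \<and>
     (\<forall>\<kappa>\<in>kseqs n k. size (filter_mset (\<lambda>\<pi>. subseq \<kappa> \<pi>) X) = lam)"

definition g :: "nat \<Rightarrow> nat \<Rightarrow> nat" where
  "g n k = (LEAST lam. \<exists>X. is_PSCA n k lam X)"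

end

theory Submission
  imports Defs "HOL-Analysis.Convex"
begin


lemma swap4:
  fixes F :: "'a \<Rightarrow> 'b \<Rightarrow> 'c \<Rightarrow> 'd \<Rightarrow> real"
  shows "(\<Sum>k\<in>K. \<Sum>m\<in>M. \<Sum>i\<in>I. \<Sum>l\<in>L. F k m i l) = (\<Sum>i\<in>I. \<Sum>l\<in>L. \<Sum>k\<in>K. \<Sum>m\<in>M. F k m i l)"
proof -
  have "(\<Sum>k\<in>K. \<Sum>m\<in>M. \<Sum>i\<in>I. \<Sum>l\<in>L. F k m i l) = (\<Sum>k\<in>K. \<Sum>i\<in>I. \<Sum>l\<in>L. \<Sum>m\<in>M. F k m i l)"
    by (rule sum.cong[OF refl], subst sum.swap, rule sum.cong[OF refl], rule sum.swap)
  also have "\<dots> = (\<Sum>i\<in>I. \<Sum>l\<in>L. \<Sum>k\<in>K. \<Sum>m\<in>M. F k m i l)"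
    by (subst sum.swap, rule sum.cong[OF refl], rule sum.swap)
  finally show ?thesis .
qed

lemma gram_bound:
  fixes v :: "'i \<Rightarrow> 'k \<Rightarrow> real" and W :: "'i \<Rightarrow> 'i \<Rightarrow> real"
  assumes fI: "finite I" and fK: "finite K"
    and Wsym: "\<And>i j. W i j = W j i"
    and inv: "\<And>i l. i \<in> I \<Longrightarrow> l \<in> I \<Longrightarrow>
        (\<Sum>j\<in>I. W i j * (\<Sum>\<kappa>\<in>K. v j \<kappa> * v l \<kappa>)) = (if i = l then 1 else 0)"
  shows "card I \<le> card K"
proof -
  define A where "A i \<mu> = (\<Sum>j\<in>I. W i j * v j \<mu>)" for i \<mu>
  define P where "P \<kappa> \<mu> = (\<Sum>i\<in>I. v i \<kappa> * A i \<mu>)" for \<kappa> \<mu>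
  have Av: "(\<Sum>\<mu>\<in>K. A i \<mu> * v l \<mu>) = (if i = l then 1 else 0)" if "i \<in> I" "l \<in> I" for i l
  proof -
    have "(\<Sum>\<mu>\<in>K. A i \<mu> * v l \<mu>) = (\<Sum>\<mu>\<in>K. \<Sum>j\<in>I. W i j * v j \<mu> * v l \<mu>)"
      by (simp add: A_def sum_distrib_right)
    also have "\<dots> = (\<Sum>j\<in>I. W i j * (\<Sum>\<kappa>\<in>K. v j \<kappa> * v l \<kappa>))"
      by (subst sum.swap) (simp add: sum_distrib_left mult.assoc)
    finally show ?thesis using inv[OF that] by simp
  qed
  have Psym: "P \<kappa> \<mu> = P \<mu> \<kappa>" for \<kappa> \<mu>
  proof -
    have "P \<kappa> \<mu> = (\<Sum>i\<in>I. \<Sum>j\<in>I. W i j * v i \<kappa> * v j \<mu>)"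
      by (simp add: P_def A_def sum_distrib_left mult.assoc mult.left_commute)
    also have "\<dots> = (\<Sum>j\<in>I. \<Sum>i\<in>I. W i j * v i \<kappa> * v j \<mu>)" by (rule sum.swap)
    also have "\<dots> = P \<mu> \<kappa>"
      unfolding P_def A_def by (simp add: sum_distrib_left Wsym mult.commute mult.left_commute)
    finally show ?thesis .
  qed
  have tr: "(\<Sum>\<kappa>\<in>K. P \<kappa> \<kappa>) = real (card I)"
  proof -
    have "(\<Sum>\<kappa>\<in>K. P \<kappa> \<kappa>) = (\<Sum>i\<in>I. \<Sum>\<kappa>\<in>K. A i \<kappa> * v i \<kappa>)"
      unfolding P_def by (subst sum.swap) (simp add: mult.commute)
    also have "\<dots> = (\<Sum>i\<in>I. 1)" by (rule sum.cong) (auto simp: Av)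
    finally show ?thesis by simp
  qed
  have tr2: "(\<Sum>\<kappa>\<in>K. \<Sum>\<mu>\<in>K. P \<kappa> \<mu> * P \<mu> \<kappa>) = real (card I)"
  proof -
    have "(\<Sum>\<kappa>\<in>K. \<Sum>\<mu>\<in>K. P \<kappa> \<mu> * P \<mu> \<kappa>)
        = (\<Sum>\<kappa>\<in>K. \<Sum>\<mu>\<in>K. \<Sum>i\<in>I. \<Sum>l\<in>I. (v i \<kappa> * A i \<mu>) * (v l \<mu> * A l \<kappa>))"
      unfolding P_def by (simp only: sum_product)
    also have "\<dots> = (\<Sum>i\<in>I. \<Sum>l\<in>I. (\<Sum>\<kappa>\<in>K. A l \<kappa> * v i \<kappa>) * (\<Sum>\<mu>\<in>K. A i \<mu> * v l \<mu>))"
      unfolding sum_product by (subst swap4) (simp add: ac_simps)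
    also have "\<dots> = (\<Sum>i\<in>I. \<Sum>l\<in>I. (if l = i then 1 else 0) * (if i = l then 1 else 0))"
      by (intro sum.cong refl) (simp add: Av)
    also have "\<dots> = (\<Sum>i\<in>I. 1)" using fI by (simp add: if_distrib cong: if_cong)
    finally show ?thesis by simp
  qed
  have "(real (card I))\<^sup>2 \<le> (\<Sum>\<kappa>\<in>K. (P \<kappa> \<kappa>)\<^sup>2) * card K"
    using sum_squared_le_sum_of_squares[of "\<lambda>\<kappa>. P \<kappa> \<kappa>" K] tr by simp
  also have "(\<Sum>\<kappa>\<in>K. (P \<kappa> \<kappa>)\<^sup>2) \<le> (\<Sum>\<kappa>\<in>K. \<Sum>\<mu>\<in>K. P \<kappa> \<mu> * P \<mu> \<kappa>)"
  proof (rule sum_mono)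
    fix \<kappa> assume k: "\<kappa> \<in> K"
    have "(P \<kappa> \<kappa>)\<^sup>2 = (\<Sum>\<mu>\<in>{\<kappa>}. P \<kappa> \<mu> * P \<mu> \<kappa>)" by (simp add: power2_eq_square)
    also have "\<dots> \<le> (\<Sum>\<mu>\<in>K. P \<kappa> \<mu> * P \<mu> \<kappa>)"
      by (rule sum_mono2) (use fK k Psym in auto)
    finally show "(P \<kappa> \<kappa>)\<^sup>2 \<le> (\<Sum>\<mu>\<in>K. P \<kappa> \<mu> * P \<mu> \<kappa>)" .
  qed
  then have "(\<Sum>\<kappa>\<in>K. (P \<kappa> \<kappa>)\<^sup>2) * card K \<le> real (card I) * card K"
    using tr2 by (simp add: mult_right_mono)
  finally have "(real (card I))\<^sup>2 \<le> real (card I) * card K" .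
  then have "real (card I) \<le> card K"
    by (cases "card I = 0") (auto simp: power2_eq_square)
  then show ?thesis by simp
qed


definition bef :: "nat list \<Rightarrow> nat \<Rightarrow> nat \<Rightarrow> bool" where
  "bef \<pi> a b \<longleftrightarrow> (\<exists>i j. i < j \<and> j < length \<pi> \<and> \<pi>!i = a \<and> \<pi>!j = b)"

lemma subseq_Cons_iff:
  "subseq (x#xs) ys \<longleftrightarrow> (\<exists>i<length ys. ys!i = x \<and> subseq xs (drop (Suc i) ys))"
proof (induction ys)
  case Nil then show ?case by simp
next
  case (Cons y ys)
  have dr: "subseq xs (drop i ys) \<Longrightarrow> subseq xs ys" for i
    by (metis append_take_drop_id subseq_drop_many)
  show ?case
  proof (cases "x = y")
    case True
    then show ?thesis
      by (auto simp: less_Suc_eq_0_disj dr)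
  next
    case False
    then show ?thesis using Cons.IH
      by (auto simp: less_Suc_eq_0_disj)
  qed
qed

lemma bef_drop:
  "bef (drop d \<pi>) b c \<longleftrightarrow> (\<exists>j l. d \<le> j \<and> j < l \<and> l < length \<pi> \<and> \<pi>!j = b \<and> \<pi>!l = c)"
proof
  assume "bef (drop d \<pi>) b c"
  then obtain i j where "i < j" "j < length (drop d \<pi>)" "drop d \<pi> ! i = b" "drop d \<pi> ! j = c"
    unfolding bef_def by blast
  then show "\<exists>j l. d \<le> j \<and> j < l \<and> l < length \<pi> \<and> \<pi>!j = b \<and> \<pi>!l = c"
    by (intro exI[of _ "d+i"] exI[of _ "d+j"]) auto
next
  assume "\<exists>j l. d \<le> j \<and> j < l \<and> l < length \<pi> \<and> \<pi>!j = b \<and> \<pi>!l = c"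
  then obtain j l where "d \<le> j" "j < l" "l < length \<pi>" "\<pi>!j = b" "\<pi>!l = c" by blast
  then show "bef (drop d \<pi>) b c" unfolding bef_def
    by (intro exI[of _ "j-d"] exI[of _ "l-d"]) auto
qed

lemma subseq2: "subseq [a,b] \<pi> \<longleftrightarrow> bef \<pi> a b"
proof -
  have "subseq [a,b] \<pi> \<longleftrightarrow> (\<exists>i<length \<pi>. \<pi>!i = a \<and> b \<in> set (drop (Suc i) \<pi>))"
    unfolding subseq_Cons_iff[of a "[b]"] subseq_singleton_left ..
  also have "\<dots> \<longleftrightarrow> bef \<pi> a b"
    unfolding bef_def in_set_conv_nth
    apply (auto simp: Suc_le_eq)
     apply (metis add_Suc less_add_Suc1 less_diff_conv add.commute)
    apply (rule_tac x=i in exI, simp)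
    apply (rule_tac x="j - Suc i" in exI, simp)
    done
  finally show ?thesis .
qed

lemma subseq3:
  assumes "distinct \<pi>"
  shows "subseq [a,b,c] \<pi> \<longleftrightarrow> bef \<pi> a b \<and> bef \<pi> b c"
proof -
  have "subseq [a,b,c] \<pi> \<longleftrightarrow> (\<exists>i<length \<pi>. \<pi>!i = a \<and> bef (drop (Suc i) \<pi>) b c)"
    by (simp add: subseq_Cons_iff[of a] subseq2)
  also have "\<dots> \<longleftrightarrow> (\<exists>i j l. i < j \<and> j < l \<and> l < length \<pi> \<and> \<pi>!i = a \<and> \<pi>!j = b \<and> \<pi>!l = c)"
    unfolding bef_drop
  proof
    assume "\<exists>i<length \<pi>. \<pi> ! i = a \<and> (\<exists>j l. Suc i \<le> j \<and> j < l \<and> l < length \<pi> \<and> \<pi> ! j = b \<and> \<pi> ! l = c)"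
    then obtain i j l where "Suc i \<le> j" "j < l" "l < length \<pi>" "\<pi>!i = a" "\<pi> ! j = b" "\<pi> ! l = c" by blast
    then show "\<exists>i j l. i < j \<and> j < l \<and> l < length \<pi> \<and> \<pi>!i = a \<and> \<pi>!j = b \<and> \<pi>!l = c"
      by (intro exI[of _ i] exI[of _ j] exI[of _ l]) simp
  next
    assume "\<exists>i j l. i < j \<and> j < l \<and> l < length \<pi> \<and> \<pi>!i = a \<and> \<pi>!j = b \<and> \<pi>!l = c"
    then obtain i j l where "i < j" "j < l" "l < length \<pi>" "\<pi>!i = a" "\<pi> ! j = b" "\<pi> ! l = c" by blast
    then show "\<exists>i<length \<pi>. \<pi> ! i = a \<and> (\<exists>j l. Suc i \<le> j \<and> j < l \<and> l < length \<pi> \<and> \<pi> ! j = b \<and> \<pi> ! l = c)"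
      by (intro exI[of _ i] conjI exI[of _ j] exI[of _ l]) auto
  qed
  also have "\<dots> \<longleftrightarrow> bef \<pi> a b \<and> bef \<pi> b c"
  proof
    assume "bef \<pi> a b \<and> bef \<pi> b c"
    then obtain i j j' l where "i < j" "j < length \<pi>" "\<pi>!i = a" "\<pi>!j = b"
      "j' < l" "l < length \<pi>" "\<pi>!j' = b" "\<pi>!l = c" unfolding bef_def by blast
    moreover from this have "j = j'" using assms nth_eq_iff_index_eq by fastforce
    ultimately show "\<exists>i j l. i < j \<and> j < l \<and> l < length \<pi> \<and> \<pi>!i = a \<and> \<pi>!j = b \<and> \<pi>!l = c"
      by blast
  qed (unfold bef_def, blast intro: order.strict_trans)
  finally show ?thesis .
qed

lemma bef_trans:
  assumes "distinct \<pi>" "bef \<pi> a b" "bef \<pi> b c" shows "bef \<pi> a c"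
proof -
  have "subseq [a,b,c] \<pi>" using subseq3[OF assms(1)] assms by blast
  moreover have "subseq [a,c] [a,b,c]" by simp
  ultimately show ?thesis by (metis subseq2 subseq_order.trans)
qed

lemma bef_asym:
  assumes "distinct \<pi>" "bef \<pi> a b" shows "\<not> bef \<pi> b a"
proof
  assume "bef \<pi> b a"
  with assms(2) obtain i j i' j' where "i < j" "j < length \<pi>" "\<pi>!i = a" "\<pi>!j = b"
      "i' < j'" "j' < length \<pi>" "\<pi>!i' = b" "\<pi>!j' = a" unfolding bef_def by blast
  moreover from this have "j = i'" "i = j'" using assms(1) nth_eq_iff_index_eq by fastforce+
  ultimately show False by simp
qed

lemma bef_total:
  assumes "a \<in> set \<pi>" "b \<in> set \<pi>" "a \<noteq> b" shows "bef \<pi> a b \<or> bef \<pi> b a"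
proof -
  from assms obtain i j where "i < length \<pi>" "j < length \<pi>" "\<pi>!i = a" "\<pi>!j = b"
    by (auto simp: in_set_conv_nth)
  moreover have "i \<noteq> j" using assms(3) calculation by auto
  ultimately show ?thesis unfolding bef_def by (metis linorder_neqE_nat)
qed

lemma bef_neg:
  assumes "distinct \<pi>" "a \<in> set \<pi>" "b \<in> set \<pi>" "a \<noteq> b" shows "bef \<pi> b a \<longleftrightarrow> \<not> bef \<pi> a b"
  using assms bef_asym bef_total by blast



lemma inv_check:
  fixes n :: nat and L :: real
  assumes L: "L > 0" and n: "2 \<le> n" and i: "i \<in> {1..n}" and l: "l \<in> {1..n}"
  defines "W \<equiv> \<lambda>i j. if i=1 \<and> j=1 then 1/(6*L) else if i=1 \<or> j=1 then 0
            else ((if i=j then 1 else 0) - 1/(real n+1))/(4*L)"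
  and "Gv \<equiv> \<lambda>i l. if i=1 \<and> l=1 then 6*L else if i=1 \<or> l=1 then 0 else if i=l then 6*L else 2*L"
  shows "(\<Sum>j\<in>{1..n}. W i j * Gv j l) = (if i = l then 1 else 0)"
proof -
  have split: "{1..n} = insert 1 {2..n}" using n by auto
  have S: "(\<Sum>j\<in>{1..n}. W i j * Gv j l) = W i 1 * Gv 1 l + (\<Sum>j\<in>{2..n}. W i j * Gv j l)"
    unfolding split by (subst sum.insert) auto
  show ?thesis
  proof (cases "i = 1")
    case True
    have "(\<Sum>j\<in>{2..n}. W i j * Gv j l) = 0" by (rule sum.neutral) (auto simp: W_def True)
    then show ?thesis using S True L by (auto simp: W_def Gv_def)
  next
    case False
    then have i2: "i \<in> {2..n}" using i by auto
    show ?thesis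
    proof (cases "l = 1")
      case True
      have "(\<Sum>j\<in>{2..n}. W i j * Gv j l) = 0" by (rule sum.neutral) (auto simp: Gv_def True)
      then show ?thesis using S True False by (auto simp: W_def Gv_def)
    next
      case False2: False
      then have l2: "l \<in> {2..n}" using l by auto
      define c where "c = 1/(real n + 1)"
      have pt: "W i j * Gv j l = (if i = j then 1/2 else 0) + (if j = i then (if j = l then 1 else 0) else 0)
                 - c/2 - (if j = l then c else 0)" if "j \<in> {2..n}" for j
        using that False False2 L unfolding W_def Gv_def c_def[symmetric]
        by (auto simp: field_simps)
      have "(\<Sum>j\<in>{2..n}. W i j * Gv j l) = (\<Sum>j\<in>{2..n}. (if i = j then 1/2 else 0) + (if j = i then (if j = l then 1 else 0) else 0)
                 - c/2 - (if j = l then c else 0))"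
        by (rule sum.cong) (auto simp: pt)
      also have "\<dots> = 1/2 + (if i = l then 1 else 0) - real (n - 1) * c / 2 - c"
        using i2 l2 by (simp add: sum.distrib sum_subtractf sum.delta sum.delta')
      also have "\<dots> = (if i = l then 1 else 0)"
        using n unfolding c_def by (auto simp: field_simps of_nat_diff) (smt (verit) mult_nonneg_nonneg of_nat_0_le_iff)
      finally show ?thesis using S False by (simp add: W_def)
    qed
  qed
qed


lemma card_split:
  assumes "finite A"
  shows "card {a\<in>A. Q a \<and> P a} + card {a\<in>A. Q a \<and> \<not> P a} = card {a\<in>A. Q a}"
proof -
  have "{a\<in>A. Q a \<and> P a} \<union> {a\<in>A. Q a \<and> \<not> P a} = {a\<in>A. Q a}" by auto
  moreover have "card ({a\<in>A. Q a \<and> P a} \<union> {a\<in>A. Q a \<and> \<not> P a}) = card {a\<in>A. Q a \<and> P a} + card {a\<in>A. Q a \<and> \<not> P a}"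
    by (rule card_Un_disjoint) (use assms in auto)
  ultimately show ?thesis by simp
qed

lemma sum_pm:
  assumes "finite K"
  shows "(\<Sum>k\<in>K. if P k then 1 else -1 :: real) = real (card {k\<in>K. P k}) - real (card {k\<in>K. \<not> P k})"
proof -
  have "(\<Sum>k\<in>K. if P k then 1 else -1 :: real) = (\<Sum>k\<in>{k\<in>K. P k}. 1) + (\<Sum>k\<in>{k\<in>K. \<not> P k}. -1)"
    using assms by (simp add: sum.If_cases Int_def)
  then show ?thesis by simp
qed

lemma psca_bound:
  assumes n: "3 \<le> n" and X: "is_PSCA n 3 lam X"
  shows "n \<le> 6 * lam"
proof -
  obtain xs where xs: "mset xs = X" using ex_mset by blast
  define m where "m = length xs"
  define K where "K = {..<m}"
  have fK: "finite K" by (simp add: K_def)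
  have lam: "lam > 0" using X by (simp add: is_PSCA_def)
  have perm: "xs!k \<in> perms_seq n" if "k \<in> K" for k
    using X xs that unfolding is_PSCA_def K_def m_def by (auto dest!: nth_mem)
  then have dist: "distinct (xs!k)" and setk: "set (xs!k) = {1..n}" if "k \<in> K" for k
    using that by (auto simp: perms_seq_def)
  have cnt: "card {k\<in>K. subseq \<kappa> (xs!k)} = lam" if "\<kappa> \<in> kseqs n 3" for \<kappa>
  proof -
    have "lam = size (filter_mset (\<lambda>\<pi>. subseq \<kappa> \<pi>) X)" using X that by (simp add: is_PSCA_def)
    also have "\<dots> = length (filter (\<lambda>\<pi>. subseq \<kappa> \<pi>) xs)"
      unfolding xs[symmetric] mset_filter[symmetric] size_mset ..
    also have "\<dots> = card {k\<in>K. subseq \<kappa> (xs!k)}"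
      by (simp add: length_filter_conv_card K_def m_def)
    finally show ?thesis by simp
  qed
  have ks: "[a,b,c] \<in> kseqs n 3" if "a \<in> {1..n}" "b \<in> {1..n}" "c \<in> {1..n}" "a \<noteq> b" "a \<noteq> c" "b \<noteq> c" for a b c
    using that by (auto simp: kseqs_def)
  define B where "B k x \<longleftrightarrow> bef (xs!k) x 1" for k x
  have neg: "bef (xs!k) b a \<longleftrightarrow> \<not> bef (xs!k) a b"
    if "k \<in> K" "a \<in> {1..n}" "b \<in> {1..n}" "a \<noteq> b" for k a b
    by (rule bef_neg[OF dist[OF that(1)]]) (use that setk[OF that(1)] in auto)
  have s3: "subseq [a,b,c] (xs!k) \<longleftrightarrow> bef (xs!k) a b \<and> bef (xs!k) b c" if "k \<in> K" for k a b c
    using subseq3[OF dist[OF that]] .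
  have negx1: "bef (xs!k) 1 x \<longleftrightarrow> \<not> B k x" if "k \<in> K" "x \<in> {2..n}" for k x
    unfolding B_def by (rule neg) (use that n in auto)
  have negxy: "bef (xs!k) y x \<longleftrightarrow> \<not> bef (xs!k) x y" if "k \<in> K" "x \<in> {2..n}" "y \<in> {2..n}" "x \<noteq> y" for k x y
    by (rule neg) (use that n in auto)
  have dj: "\<not> (subseq [a,b,c] (xs!k) \<and> subseq [b,a,d] (xs!k))" if "k \<in> K" for k a b c d
    using s3[OF that] bef_asym[OF dist[OF that]] by blast
  have dj2: "\<not> (subseq [c,a,b] (xs!k) \<and> subseq [d,b,a] (xs!k))" if "k \<in> K" for k a b c d
    using s3[OF that] bef_asym[OF dist[OF that]] by blast
  have c1: "card {k\<in>K. B k x \<and> \<not> B k y} = lam" if "x \<in> {2..n}" "y \<in> {2..n}" "x \<noteq> y" for x y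
  proof -
    have "{k\<in>K. B k x \<and> \<not> B k y} = {k\<in>K. subseq [x,1,y] (xs!k)}"
    proof (rule Collect_cong)
      fix k show "(k \<in> K \<and> B k x \<and> \<not> B k y) \<longleftrightarrow> (k \<in> K \<and> subseq [x,1,y] (xs!k))"
        using that by (cases "k \<in> K") (use s3[of k x 1 y] negx1[of k y] in \<open>auto simp: B_def\<close>)
    qed
    then show ?thesis using cnt ks that by auto
  qed
  have c2: "card {k\<in>K. B k x \<and> B k y} = 2 * lam" if "x \<in> {2..n}" "y \<in> {2..n}" "x \<noteq> y" for x y
  proof -
    have "{k\<in>K. B k x \<and> B k y} = {k\<in>K. subseq [x,y,1] (xs!k)} \<union> {k\<in>K. subseq [y,x,1] (xs!k)}"
    proof (rule set_eqI)
      fix k show "k \<in> {k\<in>K. B k x \<and> B k y} \<longleftrightarrow> k \<in> {k\<in>K. subseq [x,y,1] (xs!k)} \<union> {k\<in>K. subseq [y,x,1] (xs!k)}"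
      proof (cases "k \<in> K")
        case True then show ?thesis using s3[OF True, of x y 1] s3[OF True, of y x 1] negxy[OF True that]
          using bef_trans[OF dist[OF True]] unfolding B_def by blast
      qed simp
    qed
    moreover have "card ({k\<in>K. subseq [x,y,1] (xs!k)} \<union> {k\<in>K. subseq [y,x,1] (xs!k)})
       = card {k\<in>K. subseq [x,y,1] (xs!k)} + card {k\<in>K. subseq [y,x,1] (xs!k)}"
      apply (rule card_Un_disjoint)
      using fK apply simp
      using fK apply simp
      using dj by blast
    ultimately show ?thesis using cnt ks that by auto
  qed
  have c3: "card {k\<in>K. \<not> B k x \<and> \<not> B k y} = 2 * lam" if "x \<in> {2..n}" "y \<in> {2..n}" "x \<noteq> y" for x y
  proof -
    have "{k\<in>K. \<not> B k x \<and> \<not> B k y} = {k\<in>K. subseq [1,x,y] (xs!k)} \<union> {k\<in>K. subseq [1,y,x] (xs!k)}"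
    proof (rule set_eqI)
      fix k show "k \<in> {k\<in>K. \<not> B k x \<and> \<not> B k y} \<longleftrightarrow> k \<in> {k\<in>K. subseq [1,x,y] (xs!k)} \<union> {k\<in>K. subseq [1,y,x] (xs!k)}"
      proof (cases "k \<in> K")
        case True then show ?thesis using s3[OF True, of 1 x y] s3[OF True, of 1 y x] negxy[OF True that]
           negx1[OF True that(1)] negx1[OF True that(2)]
          using bef_trans[OF dist[OF True]] unfolding B_def by blast
      qed simp
    qed
    moreover have "card ({k\<in>K. subseq [1,x,y] (xs!k)} \<union> {k\<in>K. subseq [1,y,x] (xs!k)})
       = card {k\<in>K. subseq [1,x,y] (xs!k)} + card {k\<in>K. subseq [1,y,x] (xs!k)}"
      apply (rule card_Un_disjoint)
      using fK apply simp
      using fK apply simp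
      using dj2 by blast
    ultimately show ?thesis using cnt ks that by auto
  qed
  have other: "\<exists>y\<in>{2..n}. y \<noteq> x" for x
    using n by (intro bexI[of _ "if x = 2 then 3 else 2"]) auto
  have cB: "card {k\<in>K. B k x} = 3 * lam" if "x \<in> {2..n}" for x
  proof -
    obtain y where y: "y \<in> {2..n}" "y \<noteq> x" using other by blast
    show ?thesis using card_split[OF fK, of "\<lambda>k. B k x" "\<lambda>k. B k y"] c1[OF that y(1)] c2[OF that y(1)] y
      by simp
  qed
  have cnB: "card {k\<in>K. \<not> B k x} = 3 * lam" if "x \<in> {2..n}" for x
  proof -
    obtain y where y: "y \<in> {2..n}" "y \<noteq> x" using other by blast
    have "{k\<in>K. \<not> B k x \<and> B k y} = {k\<in>K. B k y \<and> \<not> B k x}" by auto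
    then show ?thesis using card_split[OF fK, of "\<lambda>k. \<not> B k x" "\<lambda>k. B k y"] c1[OF y(1) that] c3[OF that y(1)] y
      by simp
  qed
  have m6: "m = 6 * lam"
  proof -
    have 2: "(2::nat) \<in> {2..n}" using n by auto
    have "card {k\<in>K. True \<and> B k 2} + card {k\<in>K. True \<and> \<not> B k 2} = card {k\<in>K. True}"
      by (rule card_split[OF fK])
    then show ?thesis using cB[OF 2] cnB[OF 2] by (simp add: K_def)
  qed
  define v where "v i k = (if i = 1 then 1 else if B k i then 1 else -1 :: real)" for i k
  define L where "L = real lam"
  define W where "W \<equiv> \<lambda>(i::nat) (j::nat). if i=1 \<and> j=1 then 1/(6*L) else if i=1 \<or> j=1 then 0
            else ((if i=j then 1 else 0) - 1/(real n+1))/(4*L)"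
  define Gv where "Gv \<equiv> \<lambda>(i::nat) (l::nat). if i=1 \<and> l=1 then 6*L else if i=1 \<or> l=1 then 0 else if i=l then 6*L else 2*L"
  have mK: "card K = m" by (simp add: K_def)
  have G: "(\<Sum>k\<in>K. v i k * v l k) = Gv i l" if "i \<in> {1..n}" "l \<in> {1..n}" for i l
  proof (cases "i = 1")
    case True
    show ?thesis
    proof (cases "l = 1")
      case True
      then show ?thesis using \<open>i = 1\<close> mK m6 by (simp add: v_def Gv_def L_def)
    next
      case False
      then have l2: "l \<in> {2..n}" using that by auto
      have "(\<Sum>k\<in>K. v i k * v l k) = (\<Sum>k\<in>K. if B k l then 1 else -1)"
        using True False by (simp add: v_def)
      also have "\<dots> = 0" using sum_pm[OF fK] cB[OF l2] cnB[OF l2] by simp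
      finally show ?thesis using True False by (simp add: Gv_def)
    qed
  next
    case False
    then have i2: "i \<in> {2..n}" using that by auto
    show ?thesis
    proof (cases "l = 1")
      case True
      have "(\<Sum>k\<in>K. v i k * v l k) = (\<Sum>k\<in>K. if B k i then 1 else -1)"
        using True False by (simp add: v_def)
      also have "\<dots> = 0" using sum_pm[OF fK] cB[OF i2] cnB[OF i2] by simp
      finally show ?thesis using True False by (simp add: Gv_def)
    next
      case False2: False
      then have l2: "l \<in> {2..n}" using that by auto
      show ?thesis
      proof (cases "i = l")
        case True
        have "(\<Sum>k\<in>K. v i k * v l k) = (\<Sum>k\<in>K. 1)"
          using True False by (intro sum.cong) (auto simp: v_def)
        then show ?thesis using True False mK m6 by (simp add: Gv_def L_def)
      next
        case neq: False
        have "(\<Sum>k\<in>K. v i k * v l k) = (\<Sum>k\<in>K. if (B k i \<longleftrightarrow> B k l) then 1 else -1)"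
          using False False2 by (intro sum.cong) (auto simp: v_def)
        also have "\<dots> = real (card {k\<in>K. B k i \<longleftrightarrow> B k l}) - real (card {k\<in>K. \<not> (B k i \<longleftrightarrow> B k l)})"
          by (rule sum_pm[OF fK])
        also have "card {k\<in>K. B k i \<longleftrightarrow> B k l} = 4 * lam"
        proof -
          have "card {k\<in>K. (B k i \<longleftrightarrow> B k l) \<and> B k i} + card {k\<in>K. (B k i \<longleftrightarrow> B k l) \<and> \<not> B k i}
              = card {k\<in>K. B k i \<longleftrightarrow> B k l}" by (rule card_split[OF fK])
          moreover have "{k\<in>K. (B k i \<longleftrightarrow> B k l) \<and> B k i} = {k\<in>K. B k i \<and> B k l}" by auto
          moreover have "{k\<in>K. (B k i \<longleftrightarrow> B k l) \<and> \<not> B k i} = {k\<in>K. \<not> B k i \<and> \<not> B k l}" by auto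
          ultimately show ?thesis using c2[OF i2 l2 neq] c3[OF i2 l2 neq] by simp
        qed
        also have "card {k\<in>K. \<not> (B k i \<longleftrightarrow> B k l)} = 2 * lam"
        proof -
          have "card {k\<in>K. \<not> (B k i \<longleftrightarrow> B k l) \<and> B k i} + card {k\<in>K. \<not> (B k i \<longleftrightarrow> B k l) \<and> \<not> B k i}
              = card {k\<in>K. \<not> (B k i \<longleftrightarrow> B k l)}" by (rule card_split[OF fK])
          moreover have "{k\<in>K. \<not> (B k i \<longleftrightarrow> B k l) \<and> B k i} = {k\<in>K. B k i \<and> \<not> B k l}" by auto
          moreover have "{k\<in>K. \<not> (B k i \<longleftrightarrow> B k l) \<and> \<not> B k i} = {k\<in>K. B k l \<and> \<not> B k i}" by auto
          ultimately show ?thesis using c1[OF i2 l2 neq] c1[OF l2 i2] neq by simp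
        qed
        finally show ?thesis using False False2 neq by (simp add: Gv_def L_def)
      qed
    qed
  qed
  have Lpos: "L > 0" using lam by (simp add: L_def)
  have "card {1..n} \<le> card K"
  proof (rule gram_bound[where v = v and W = W])
    show "W i j = W j i" for i j by (auto simp: W_def)
    fix i l assume il: "i \<in> {1..n}" "l \<in> {1..n}"
    have "(\<Sum>j\<in>{1..n}. W i j * (\<Sum>\<kappa>\<in>K. v j \<kappa> * v l \<kappa>)) = (\<Sum>j\<in>{1..n}. W i j * Gv j l)"
      by (rule sum.cong) (use G il in auto)
    also have "\<dots> = (if i = l then 1 else 0)"
      unfolding W_def Gv_def by (rule inv_check) (use Lpos n il in auto)
    finally show "(\<Sum>j\<in>{1..n}. W i j * (\<Sum>\<kappa>\<in>K. v j \<kappa> * v l \<kappa>)) = (if i = l then 1 else 0)" .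
  qed (use fK in auto)
  then show ?thesis using mK m6 by simp
qed


lemma finite_perms: "finite (perms_seq n)"
proof -
  have "perms_seq n \<subseteq> {xs. set xs \<subseteq> {1..n} \<and> length xs = n}"
    unfolding perms_seq_def using distinct_card by fastforce
  moreover have "finite {xs. set xs \<subseteq> {1..n} \<and> length xs = (n::nat)}"
    by (rule finite_lists_length_eq) simp
  ultimately show ?thesis by (rule finite_subset)
qed

lemma relabel:
  assumes k1: "\<kappa> \<in> kseqs n k" and k2: "\<kappa>' \<in> kseqs n k"
  shows "\<exists>\<sigma>. inj_on \<sigma> {1..n} \<and> \<sigma> ` {1..n} = {1..n} \<and> map \<sigma> \<kappa> = \<kappa>'"
proof -
  have d1: "distinct \<kappa>" "length \<kappa> = k" "set \<kappa> \<subseteq> {1..n}" using k1 by (auto simp: kseqs_def)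
  have d2: "distinct \<kappa>'" "length \<kappa>' = k" "set \<kappa>' \<subseteq> {1..n}" using k2 by (auto simp: kseqs_def)
  have c: "card ({1..n} - set \<kappa>) = card ({1..n} - set \<kappa>')"
    using d1 d2 by (simp add: card_Diff_subset distinct_card)
  obtain h where h: "bij_betw h ({1..n} - set \<kappa>) ({1..n} - set \<kappa>')"
    using finite_same_card_bij[OF _ _ c] by auto
  define \<sigma> where "\<sigma> x = (if x \<in> set \<kappa> then the (map_of (zip \<kappa> \<kappa>') x) else h x)" for x
  have mp: "map \<sigma> \<kappa> = \<kappa>'"
  proof (rule nth_equalityI)
    show "length (map \<sigma> \<kappa>) = length \<kappa>'" using d1 d2 by simp
    fix i assume "i < length (map \<sigma> \<kappa>)"
    then have i: "i < length \<kappa>" by simp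
    then show "map \<sigma> \<kappa> ! i = \<kappa>' ! i"
      using d1 d2 by (simp add: \<sigma>_def map_of_zip_nth)
  qed
  have b1: "bij_betw \<sigma> (set \<kappa>) (set \<kappa>')"
  proof -
    have im: "\<sigma> ` set \<kappa> = set \<kappa>'" using mp by (metis set_map)
    have "inj_on \<sigma> (set \<kappa>)"
      using im d1 d2 by (simp add: inj_on_iff_eq_card distinct_card)
    then show ?thesis using im by (simp add: bij_betw_def)
  qed
  have b2: "bij_betw \<sigma> ({1..n} - set \<kappa>) ({1..n} - set \<kappa>')"
    using h by (rule bij_betw_cong[THEN iffD1, rotated]) (simp add: \<sigma>_def)
  have "bij_betw \<sigma> (set \<kappa> \<union> ({1..n} - set \<kappa>)) (set \<kappa>' \<union> ({1..n} - set \<kappa>'))"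
    by (rule bij_betw_combine[OF b1 b2]) auto
  moreover have "set \<kappa> \<union> ({1..n} - set \<kappa>) = {1..n}" "set \<kappa>' \<union> ({1..n} - set \<kappa>') = {1..n}"
    using d1 d2 by auto
  ultimately have "bij_betw \<sigma> {1..n} {1..n}" by simp
  then show ?thesis using mp by (auto simp: bij_betw_def)
qed

lemma count_le:
  assumes k1: "\<kappa> \<in> kseqs n k" and k2: "\<kappa>' \<in> kseqs n k"
  shows "card {\<pi>\<in>perms_seq n. subseq \<kappa> \<pi>} \<le> card {\<pi>\<in>perms_seq n. subseq \<kappa>' \<pi>}"
proof -
  obtain \<sigma> where inj: "inj_on \<sigma> {1..n}" and im: "\<sigma> ` {1..n} = {1..n}" and mp: "map \<sigma> \<kappa> = \<kappa>'"
    using relabel[OF k1 k2] by blast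
  show ?thesis
  proof (rule card_inj_on_le[where f = "map \<sigma>"])
    show "inj_on (map \<sigma>) {\<pi>\<in>perms_seq n. subseq \<kappa> \<pi>}"
    proof (rule inj_onI)
      fix x y assume x: "x \<in> {\<pi>\<in>perms_seq n. subseq \<kappa> \<pi>}" and y: "y \<in> {\<pi>\<in>perms_seq n. subseq \<kappa> \<pi>}"
        and e: "map \<sigma> x = map \<sigma> y"
      have "set x \<union> set y \<subseteq> {1..n}" using x y by (auto simp: perms_seq_def)
      then have "inj_on \<sigma> (set x \<union> set y)" using inj inj_on_subset by blast
      then show "x = y" using map_inj_on[OF e] by blast
    qed
    show "map \<sigma> ` {\<pi>\<in>perms_seq n. subseq \<kappa> \<pi>} \<subseteq> {\<pi>\<in>perms_seq n. subseq \<kappa>' \<pi>}"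
    proof
      fix y assume "y \<in> map \<sigma> ` {\<pi>\<in>perms_seq n. subseq \<kappa> \<pi>}"
      then obtain x where x: "x \<in> perms_seq n" "subseq \<kappa> x" and y: "y = map \<sigma> x" by blast
      have "distinct y" using x inj unfolding y perms_seq_def by (simp add: distinct_map)
      moreover have "set y = {1..n}" using x im unfolding y perms_seq_def by simp
      moreover have "subseq \<kappa>' y" using subseq_map[OF x(2), of \<sigma>] mp y by simp
      ultimately show "y \<in> {\<pi>\<in>perms_seq n. subseq \<kappa>' \<pi>}" by (simp add: perms_seq_def)
    qed
  qed (simp add: finite_perms)
qed

lemma exists_psca:
  assumes n: "3 \<le> n"
  shows "\<exists>lam X. is_PSCA n 3 lam X"
proof -
  define \<kappa>0 where "\<kappa>0 = [1,2,3::nat]"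
  have k0: "\<kappa>0 \<in> kseqs n 3" using n by (auto simp: kseqs_def \<kappa>0_def)
  define lam where "lam = card {\<pi>\<in>perms_seq n. subseq \<kappa>0 \<pi>}"
  have eq: "card {\<pi>\<in>perms_seq n. subseq \<kappa> \<pi>} = lam" if "\<kappa> \<in> kseqs n 3" for \<kappa>
    unfolding lam_def using count_le[OF that k0] count_le[OF k0 that] by simp
  have "[1..<n+1] = [1..<4] @ [4..<n+1]"
    using upt_add_eq_append[of 1 4 "n+1-4"] n by simp
  moreover have "[1..<4] = \<kappa>0" unfolding \<kappa>0_def by (simp add: upt_rec)
  ultimately have "[1..<n+1] = \<kappa>0 @ [4..<n+1]" by simp
  then have "subseq \<kappa>0 [1..<n+1]" by (metis subseq_order.refl subseq_rev_drop_many)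
  moreover have "[1..<n+1] \<in> perms_seq n" by (auto simp: perms_seq_def)
  ultimately have "lam > 0" unfolding lam_def using finite_perms
    by (subst card_gt_0_iff) auto
  then have "is_PSCA n 3 lam (mset_set (perms_seq n))"
    unfolding is_PSCA_def using eq finite_perms by simp
  then show ?thesis by blast
qed

theorem lemma3p1:
  fixes n :: nat
  assumes "3 \<le> n"
  shows "real (g n 3) \<ge> real n / 6"
proof -
  obtain lam X where "is_PSCA n 3 lam X" using exists_psca[OF assms] by blast
  then have "\<exists>X. is_PSCA n 3 (g n 3) X"
    unfolding g_def by (rule LeastI[where P = "\<lambda>lam. \<exists>X. is_PSCA n 3 lam X", OF exI])
  then obtain Y where "is_PSCA n 3 (g n 3) Y" by blast
  then have "n \<le> 6 * g n 3" by (rule psca_bound[OF assms])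
  then show ?thesis by simp
qed

end
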